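(* Let $G=(V,E)$ be a connected undirected unweighted graph in which every node has a self-loop, let $S\subseteq V$, and let $X\subseteq V$ be a configuration with $X\cap S\neq\emptyset$. Then $\operatorname{fp}^{\infty}(G^S,X)=1$.
   Context: Positional Voter model. A graph $G=(V,E,w)$ has node set $V$ with $|V|=n$, edge set $E\subseteq V\times V$ and weights $w\colon E\to\mathbb{R}_{>0}$; $\operatorname{in}(u)=\{v\in V:(v,u)\in E\}$. "Undirected unweighted" means $E$ is symmetric and $w\equiv 1$; "self-loop at $u$" means $(u,u)\in E$. A configuration is a set $X\subseteq V$ (the nodes carrying the novel trait $A$). Given a biased set $S\subseteq V$ and bias $\delta\ge 0$, define $f^S_X(v\mid u)=1+\delta$ if $v\in X$ and $u\in S$, and $1$ otherwise. The process $(\mathcal{X}_t)_{t\ge0}$: given $\mathcal{X}_t=X$, a node $u$ is chosen uniformly at random from $V$, then $v\in\operatorname{in}(u)$ is chosen with probability $\frac{f^S_X(v\mid u)\,w(v,u)}{\sum_{x\in\operatorname{in}(u)} f^S_X(x\mid u)\,w(x,u)}$, and $\mathcal{X}_{t+1}=X\cup\{u\}$ if $v\in X$, $\mathcal{X}_{t+1}=X\setminus\{u\}$ otherwise. Define $\operatorname{fp}(G^S,\delta,X)=\mathbb{P}[\exists t\ge0:\mathcal{X}_t=V\mid\mathcal{X}_0=X]$ and $\operatorname{fp}^{\infty}(G^S,X)=\lim_{\delta\to\infty}\operatorname{fp}(G^S,\delta,X)$. *)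

theory Defs
  imports Complex_Main
begin

text \<open>Positional Voter model on a graph G = (V, E, w) with node set V,
edge set E (pairs (v,u) meaning an edge from v to u) and weights w.\<close>

definition in_nbrs :: "'a set \<Rightarrow> ('a \<times> 'a) set \<Rightarrow> 'a \<Rightarrow> 'a set" where
  "in_nbrs V E u = {v \<in> V. (v, u) \<in> E}"

definition fit :: "'a set \<Rightarrow> real \<Rightarrow> 'a set \<Rightarrow> 'a \<Rightarrow> 'a \<Rightarrow> real" where
  "fit S \<delta> X v u = (if v \<in> X \<and> u \<in> S then 1 + \<delta> else 1)"

definition choose_prob ::
  "'a set \<Rightarrow> ('a \<times> 'a) set \<Rightarrow> ('a \<times> 'a \<Rightarrow> real) \<Rightarrow> 'a set \<Rightarrow> real \<Rightarrow> 'a set \<Rightarrow> 'a \<Rightarrow> 'a \<Rightarrow> real" where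
  "choose_prob V E w S \<delta> X u v =
     fit S \<delta> X v u * w (v, u) / (\<Sum>x\<in>in_nbrs V E u. fit S \<delta> X x u * w (x, u))"

definition upd_conf :: "'a set \<Rightarrow> 'a \<Rightarrow> 'a \<Rightarrow> 'a set" where
  "upd_conf X u v = (if v \<in> X then insert u X else X - {u})"

text \<open>hit_within V E w S \<delta> t X = P[\<exists>s \<le> t. X_s = V | X_0 = X].\<close>
fun hit_within ::
  "'a set \<Rightarrow> ('a \<times> 'a) set \<Rightarrow> ('a \<times> 'a \<Rightarrow> real) \<Rightarrow> 'a set \<Rightarrow> real \<Rightarrow> nat \<Rightarrow> 'a set \<Rightarrow> real" where
  "hit_within V E w S \<delta> 0 X = (if X = V then 1 else 0)"
| "hit_within V E w S \<delta> (Suc t) X =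
     (if X = V then 1 else
        (\<Sum>u\<in>V. (1 / real (card V)) *
           (\<Sum>v\<in>in_nbrs V E u. choose_prob V E w S \<delta> X u v *
               hit_within V E w S \<delta> t (upd_conf X u v))))"

text \<open>Fixation probability fp(G^S, \<delta>, X) = P[\<exists>t. X_t = V | X_0 = X]
  = lim_{t\<rightarrow>\<infinity>} P[\<exists>s \<le> t. X_s = V].\<close>
definition fp ::
  "'a set \<Rightarrow> ('a \<times> 'a) set \<Rightarrow> ('a \<times> 'a \<Rightarrow> real) \<Rightarrow> 'a set \<Rightarrow> real \<Rightarrow> 'a set \<Rightarrow> real" where
  "fp V E w S \<delta> X = lim (\<lambda>t. hit_within V E w S \<delta> t X)"

definition connected_graph :: "'a set \<Rightarrow> ('a \<times> 'a) set \<Rightarrow> bool" where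
  "connected_graph V E = (\<forall>u\<in>V. \<forall>v\<in>V. (u, v) \<in> E\<^sup>*)"

end

theory Submission imports Defs begin

context
  fixes V :: "'a set" and E :: "('a \<times> 'a) set" and S :: "'a set" and \<delta> :: real
  assumes fin: "finite V" and EV: "E \<subseteq> V \<times> V" and loops: "\<forall>u\<in>V. (u, u) \<in> E"
    and Vne: "V \<noteq> {}" and dpos: "\<delta> \<ge> 0"
begin

lemma N_sub: "in_nbrs V E u \<subseteq> V" by (auto simp: in_nbrs_def)
lemma N_fin: "finite (in_nbrs V E u)" using N_sub fin finite_subset by blast
lemma N_self: "u \<in> V \<Longrightarrow> u \<in> in_nbrs V E u" using loops by (auto simp: in_nbrs_def)
lemma N_card: "card (in_nbrs V E u) \<le> card V" using N_sub fin card_mono by blast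

lemma fit_ge1: "fit S \<delta> X v u \<ge> 1" using dpos by (auto simp: fit_def)

lemma den_pos: "u \<in> V \<Longrightarrow> (\<Sum>x\<in>in_nbrs V E u. fit S \<delta> X x u * 1) > 0"
  apply (rule sum_pos[OF N_fin])
  using N_self fit_ge1[of X] by (auto intro: less_le_trans[of 0 1])

lemma cp_nonneg: "choose_prob V E (\<lambda>_. 1) S \<delta> X u v \<ge> 0"
  unfolding choose_prob_def using fit_ge1[of X]
  by (intro divide_nonneg_nonneg sum_nonneg) (auto intro: order_trans[of 0 1])

lemma cp_sum: "u \<in> V \<Longrightarrow> (\<Sum>v\<in>in_nbrs V E u. choose_prob V E (\<lambda>_. 1) S \<delta> X u v) = 1"
  unfolding choose_prob_def sum_divide_distrib[symmetric]
  using den_pos[of u X] by simp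

lemma card_pos: "real (card V) > 0" using fin Vne by (simp add: card_gt_0_iff)

lemma outer_one: "(\<Sum>u\<in>V. 1 / real (card V)) = 1" using card_pos by simp

lemma hit_bounds: "0 \<le> hit_within V E (\<lambda>_. 1) S \<delta> t X \<and> hit_within V E (\<lambda>_. 1) S \<delta> t X \<le> 1"
proof (induction t arbitrary: X)
  case 0 then show ?case by simp
next
  case (Suc t)
  show ?case
  proof (cases "X = V")
    case True then show ?thesis by simp
  next
    case False
    have "(\<Sum>u\<in>V. (1 / real (card V)) * (\<Sum>v\<in>in_nbrs V E u. choose_prob V E (\<lambda>_. 1) S \<delta> X u v *
               hit_within V E (\<lambda>_. 1) S \<delta> t (upd_conf X u v)))
         \<le> (\<Sum>u\<in>V. (1 / real (card V)) * (\<Sum>v\<in>in_nbrs V E u. choose_prob V E (\<lambda>_. 1) S \<delta> X u v))"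
      apply (intro sum_mono mult_left_mono)
      using Suc cp_nonneg by (auto intro: mult_right_le_one_le)
    also have "\<dots> = 1" using cp_sum outer_one by simp
    finally have 1: "(\<Sum>u\<in>V. (1 / real (card V)) * (\<Sum>v\<in>in_nbrs V E u. choose_prob V E (\<lambda>_. 1) S \<delta> X u v *
               hit_within V E (\<lambda>_. 1) S \<delta> t (upd_conf X u v))) \<le> 1" .
    have 0: "0 \<le> (\<Sum>u\<in>V. (1 / real (card V)) * (\<Sum>v\<in>in_nbrs V E u. choose_prob V E (\<lambda>_. 1) S \<delta> X u v *
               hit_within V E (\<lambda>_. 1) S \<delta> t (upd_conf X u v)))"
      using Suc cp_nonneg by (intro sum_nonneg mult_nonneg_nonneg) auto
    show ?thesis using 0 1 False by simp
  qed
qed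

lemma hit_mono: "hit_within V E (\<lambda>_. 1) S \<delta> t X \<le> hit_within V E (\<lambda>_. 1) S \<delta> (Suc t) X"
proof (induction t arbitrary: X)
  case 0
  have h: "0 \<le> hit_within V E (\<lambda>_. 1) S \<delta> (Suc 0) X" using hit_bounds by blast
  show ?case
  proof (cases "X = V")
    case True then show ?thesis by simp
  next
    case False then have "hit_within V E (\<lambda>_. 1) S \<delta> 0 X = 0" by simp
    with h show ?thesis by linarith
  qed
next
  case (Suc t)
  show ?case
  proof (cases "X = V")
    case True then show ?thesis by simp
  next
    case False
    show ?thesis using False
      apply (simp only: hit_within.simps if_False)
      apply (intro sum_mono mult_left_mono)
      using Suc cp_nonneg by auto
  qed
qed

lemma hit_lim: "(\<lambda>t. hit_within V E (\<lambda>_. 1) S \<delta> t X) \<longlonglongrightarrow> fp V E (\<lambda>_. 1) S \<delta> X"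
proof -
  have "(\<lambda>t. hit_within V E (\<lambda>_. 1) S \<delta> t X) \<longlonglongrightarrow> (SUP t. hit_within V E (\<lambda>_. 1) S \<delta> t X)"
    apply (rule LIMSEQ_incseq_SUP)
    using hit_bounds apply (auto simp: bdd_above_def)[1]
    by (rule incseq_SucI, rule hit_mono)
  then show ?thesis unfolding fp_def by (metis limI)
qed

lemma fp_bounds: "0 \<le> fp V E (\<lambda>_. 1) S \<delta> X \<and> fp V E (\<lambda>_. 1) S \<delta> X \<le> 1"
  using hit_lim[of X] hit_bounds[of _ X]
  by (meson LIMSEQ_le_const LIMSEQ_le_const2)

lemma fp_V: "fp V E (\<lambda>_. 1) S \<delta> V = 1"
proof -
  have "\<And>t. hit_within V E (\<lambda>_. 1) S \<delta> t V = 1" by (case_tac t) auto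
  then show ?thesis using hit_lim[of V] by (simp add: LIMSEQ_const_iff)
qed

lemma fp_harm: "X \<noteq> V \<Longrightarrow> fp V E (\<lambda>_. 1) S \<delta> X =
  (\<Sum>u\<in>V. (1 / real (card V)) * (\<Sum>v\<in>in_nbrs V E u. choose_prob V E (\<lambda>_. 1) S \<delta> X u v *
               fp V E (\<lambda>_. 1) S \<delta> (upd_conf X u v)))"
proof -
  assume X: "X \<noteq> V"
  have 1: "(\<lambda>t. hit_within V E (\<lambda>_. 1) S \<delta> (Suc t) X) \<longlonglongrightarrow> fp V E (\<lambda>_. 1) S \<delta> X"
    using hit_lim LIMSEQ_Suc by blast
  have 2: "(\<lambda>t. hit_within V E (\<lambda>_. 1) S \<delta> (Suc t) X) \<longlonglongrightarrow>
     (\<Sum>u\<in>V. (1 / real (card V)) * (\<Sum>v\<in>in_nbrs V E u. choose_prob V E (\<lambda>_. 1) S \<delta> X u v *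
               fp V E (\<lambda>_. 1) S \<delta> (upd_conf X u v)))"
    using X apply simp
    apply (intro tendsto_intros hit_lim) using card_pos by auto
  show ?thesis using LIMSEQ_unique[OF 1 2] .
qed


lemma leave: "(x,y) \<in> E\<^sup>* \<Longrightarrow> x \<in> X \<Longrightarrow> y \<notin> X \<Longrightarrow> \<exists>a b. (a,b)\<in>E \<and> a\<in>X \<and> b\<notin>X"
  by (induction rule: rtrancl_induct) blast+

lemma key:
  fixes \<phi> :: "nat \<Rightarrow> real" and g :: "'a set \<Rightarrow> real"
  assumes phi: "\<And>j. \<phi> j = 1 - (real (card V) / (1+\<delta>)) * ((4*real(card V)^2)^(card V) - (4*real(card V)^2)^j)"
   and g: "\<And>Y. g Y = (if Y \<subseteq> V \<and> Y \<inter> S \<noteq> {} then \<phi> (card Y) else 0)"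
   and conn: "connected_graph V E"
   and XV: "X \<subseteq> V" and XS: "X \<inter> S \<noteq> {}" and XnV: "X \<noteq> V"
  shows "(\<Sum>u\<in>V. (1/real(card V)) * (\<Sum>v\<in>in_nbrs V E u. choose_prob V E (\<lambda>_. 1) S \<delta> X u v * g (upd_conf X u v))) > \<phi> (card X)"
proof -
  define cp where "cp = choose_prob V E (\<lambda>_. 1) S \<delta> X"
  define n where "n = real (card V)"
  define \<epsilon> where "\<epsilon> = n / (1+\<delta>)"
  define B where "B = 4 * n^2"
  define k where "k = card X"
  have finX: "finite X" using XV fin finite_subset by blast
  have k1: "k \<ge> 1" using XS finX unfolding k_def by (metis Int_emptyI card_0_eq empty_iff less_one not_le)
  have kn: "k < card V" unfolding k_def using XV XnV fin by (simp add: psubset_card_mono psubset_eq)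
  have n1: "n \<ge> 1" unfolding n_def using kn by linarith
  have epos: "\<epsilon> > 0" unfolding \<epsilon>_def using n1 dpos by simp
  have B4: "B \<ge> 4" unfolding B_def using n1 by (smt (verit) one_le_power)
  have Bk: "B^k \<ge> 1" using B4 by simp
  have phi': "\<And>j. \<phi> j = 1 - \<epsilon> * (B^(card V) - B^j)" unfolding phi \<epsilon>_def B_def n_def by simp
  have phik: "\<phi> k \<le> 1" unfolding phi' using epos B4 kn
    by (simp add: power_increasing)
  define D1 where "D1 = \<epsilon> * (B^(k+1) - B^k)"
  define D0 where "D0 = \<epsilon> * B^k"
  have D0: "D0 \<ge> 0" unfolding D0_def using epos B4 by simp
  have D1eq: "D1 = \<epsilon> * B^k * (B - 1)" unfolding D1_def by (simp add: algebra_simps)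
  have D1: "D1 \<ge> 3 * n^2 * \<epsilon> * B^k"
  proof -
    have "B - 1 \<ge> 3 * n^2" unfolding B_def using n1 by (smt (verit) one_le_power)
    then have "\<epsilon> * B^k * (B - 1) \<ge> \<epsilon> * B^k * (3*n^2)" using epos Bk
      by (intro mult_left_mono) auto
    then show ?thesis unfolding D1eq by (simp add: algebra_simps)
  qed
  have D1nn: "D1 \<ge> 0" using D1 epos Bk by (smt (verit) mult_nonneg_nonneg zero_le_power2)
  have phi_succ: "\<phi> (k+1) = \<phi> k + D1" unfolding phi' D1_def by (simp add: algebra_simps)
  have phi_pred: "\<phi> (k-1) \<ge> \<phi> k - D0"
  proof -
    have "\<phi> (k-1) = \<phi> k - \<epsilon> * (B^k - B^(k-1))" unfolding phi' by (simp add: algebra_simps)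
    moreover have "\<epsilon> * (B^k - B^(k-1)) \<le> \<epsilon> * B^k" using epos B4 by simp
    ultimately show ?thesis unfolding D0_def by linarith
  qed
  define i1 where "i1 = (\<lambda>u v. if u \<notin> X \<and> v \<in> X then 1 else (0::real))"
  define i0 where "i0 = (\<lambda>u v. if u \<in> X \<and> v \<notin> X then 1 else (0::real))"
  define iS where "iS = (\<lambda>u v. if u \<in> X \<and> v \<notin> X \<and> u \<in> S then 1 else (0::real))"
  have gX: "g X = \<phi> k" using g XV XS k_def by simp
  have trm: "g (upd_conf X u v) \<ge> \<phi> k + D1 * i1 u v - D0 * i0 u v - iS u v" if u: "u \<in> V" for u v
  proof (cases "v \<in> X")
    case True
    show ?thesis
    proof (cases "u \<in> X")
      case True with \<open>v\<in>X\<close> show ?thesis using gX by (simp add: upd_conf_def i1_def i0_def iS_def insert_absorb)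
    next
      case False
      have "card (insert u X) = k + 1" using False finX k_def by simp
      moreover have "insert u X \<subseteq> V \<and> insert u X \<inter> S \<noteq> {}" using u XV XS by auto
      ultimately have "g (upd_conf X u v) = \<phi> k + D1" using True g phi_succ by (simp add: upd_conf_def)
      then show ?thesis using True False by (simp add: i1_def i0_def iS_def)
    qed
  next
    case False
    show ?thesis
    proof (cases "u \<in> X")
      case uX: True
      have c: "card (X - {u}) = k - 1" using uX finX k_def by simp
      show ?thesis
      proof (cases "u \<in> S")
        case True
        have "g (upd_conf X u v) \<ge> \<phi> k - D0 - 1"
        proof (cases "X - {u} \<subseteq> V \<and> (X - {u}) \<inter> S \<noteq> {}")
          case True then show ?thesis using g c phi_pred \<open>v\<notin>X\<close> by (simp add: upd_conf_def)
        next
          case False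
          then have "g (X - {u}) = 0" using g by presburger
          then show ?thesis using phik D0 \<open>v\<notin>X\<close> by (simp add: upd_conf_def)
        qed
        then show ?thesis using True uX False by (simp add: i1_def i0_def iS_def)
      next
        case uS: False
        have "X - {u} \<subseteq> V \<and> (X - {u}) \<inter> S \<noteq> {}" using XV XS uS by auto
        then have "g (upd_conf X u v) \<ge> \<phi> k - D0" using g c phi_pred False by (simp add: upd_conf_def)
        then show ?thesis using uS uX False by (simp add: i1_def i0_def iS_def)
      qed
    next
      case uX: False
      then show ?thesis using False gX by (simp add: upd_conf_def i1_def i0_def iS_def)
    qed
  qed
  define A1 where "A1 = (\<lambda>u. \<Sum>v\<in>in_nbrs V E u. cp u v * i1 u v)"
  define A0 where "A0 = (\<lambda>u. \<Sum>v\<in>in_nbrs V E u. cp u v * i0 u v)"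
  define AS where "AS = (\<lambda>u. \<Sum>v\<in>in_nbrs V E u. cp u v * iS u v)"
  have cpnn: "\<And>u v. cp u v \<ge> 0" unfolding cp_def by (rule cp_nonneg)
  have cpsum: "\<And>u. u \<in> V \<Longrightarrow> (\<Sum>v\<in>in_nbrs V E u. cp u v) = 1" unfolding cp_def by (rule cp_sum)
  have inner: "(\<Sum>v\<in>in_nbrs V E u. cp u v * g (upd_conf X u v)) \<ge> \<phi> k + D1 * A1 u - D0 * A0 u - AS u"
    if u: "u \<in> V" for u
  proof -
    have "(\<Sum>v\<in>in_nbrs V E u. cp u v * g (upd_conf X u v)) \<ge>
          (\<Sum>v\<in>in_nbrs V E u. cp u v * (\<phi> k + D1 * i1 u v - D0 * i0 u v - iS u v))"
      using trm[OF u] cpnn by (intro sum_mono mult_left_mono) auto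
    also have "(\<Sum>v\<in>in_nbrs V E u. cp u v * (\<phi> k + D1 * i1 u v - D0 * i0 u v - iS u v))
       = \<phi> k * (\<Sum>v\<in>in_nbrs V E u. cp u v) + D1 * A1 u - D0 * A0 u - AS u"
      unfolding A1_def A0_def AS_def
      by (simp add: algebra_simps sum.distrib sum_subtractf sum_distrib_left)
    finally show ?thesis using cpsum[OF u] by simp
  qed
  define U where "U = (\<Sum>u\<in>V. (1/n) * A1 u)"
  define Dn where "Dn = (\<Sum>u\<in>V. (1/n) * A0 u)"
  define b where "b = (\<Sum>u\<in>V. (1/n) * AS u)"
  have o1: "(\<Sum>u\<in>V. 1/n) = 1" unfolding n_def using outer_one by simp
  have T: "(\<Sum>u\<in>V. (1/n) * (\<Sum>v\<in>in_nbrs V E u. cp u v * g (upd_conf X u v))) \<ge> \<phi> k + D1 * U - D0 * Dn - b"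
  proof -
    have "(\<Sum>u\<in>V. (1/n) * (\<Sum>v\<in>in_nbrs V E u. cp u v * g (upd_conf X u v))) \<ge>
          (\<Sum>u\<in>V. (1/n) * (\<phi> k + D1 * A1 u - D0 * A0 u - AS u))"
      using inner n1 by (intro sum_mono mult_left_mono) auto
    also have "(\<Sum>u\<in>V. (1/n) * (\<phi> k + D1 * A1 u - D0 * A0 u - AS u)) = 
       \<phi> k * (\<Sum>u\<in>V. 1/n) + D1 * U - D0 * Dn - b"
      unfolding U_def Dn_def b_def
      by (simp add: algebra_simps sum.distrib sum_subtractf sum_distrib_left)
    finally show ?thesis using o1 by simp
  qed
  have A0le: "A0 u \<le> 1" if "u \<in> V" for u
  proof -
    have "A0 u \<le> (\<Sum>v\<in>in_nbrs V E u. cp u v)" unfolding A0_def using cpnn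
      by (intro sum_mono) (auto simp: i0_def)
    then show ?thesis using cpsum that by simp
  qed
  have A0nn: "A0 u \<ge> 0" for u unfolding A0_def using cpnn by (intro sum_nonneg) (auto simp: i0_def)
  have Dn: "Dn \<le> 1"
  proof -
    have "Dn \<le> (\<Sum>u\<in>V. 1/n)" unfolding Dn_def using A0le n1 by (intro sum_mono) (simp add: divide_right_mono)
    then show ?thesis using o1 by simp
  qed
  have ASle: "AS u \<le> \<epsilon>" if u: "u \<in> V" for u
  proof -
    have each: "cp u v * iS u v \<le> 1/(1+\<delta>)" for v
    proof (cases "u \<in> X \<and> v \<notin> X \<and> u \<in> S")
      case True
      have den: "(\<Sum>x\<in>in_nbrs V E u. fit S \<delta> X x u * 1) \<ge> fit S \<delta> X u u * 1"
        using N_self[OF u] fit_ge1[of X] by (intro member_le_sum N_fin) (auto intro: order_trans[of 0 1])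
      have fu: "fit S \<delta> X u u = 1 + \<delta>" using True by (simp add: fit_def)
      have fv: "fit S \<delta> X v u = 1" using True by (simp add: fit_def)
      have "cp u v = 1 / (\<Sum>x\<in>in_nbrs V E u. fit S \<delta> X x u * 1)"
        unfolding cp_def choose_prob_def using fv by simp
      also have "\<dots> \<le> 1 / (1+\<delta>)" using den fu dpos by (intro divide_left_mono) auto
      finally show ?thesis using True by (simp add: iS_def)
    next
      case False then have "iS u v = 0" by (simp add: iS_def)
      then show ?thesis using dpos by simp
    qed
    have "AS u \<le> (\<Sum>v\<in>in_nbrs V E u. 1/(1+\<delta>))" unfolding AS_def using each by (intro sum_mono) auto
    also have "\<dots> = real (card (in_nbrs V E u)) / (1+\<delta>)" by simp
    also have "\<dots> \<le> \<epsilon>" unfolding \<epsilon>_def n_def using N_card[of u] dpos by (intro divide_right_mono) auto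
    finally show ?thesis .
  qed
  have bb: "b \<le> \<epsilon>"
  proof -
    have "b \<le> (\<Sum>u\<in>V. (1/n) * \<epsilon>)" unfolding b_def using ASle n1 by (intro sum_mono mult_left_mono) auto
    also have "\<dots> = \<epsilon>" using o1 by (simp add: sum_distrib_right[symmetric])
    finally show ?thesis .
  qed
  obtain x where x: "x \<in> X" using XS by blast
  obtain y where y: "y \<in> V" "y \<notin> X" using XV XnV by blast
  have "(x,y) \<in> E\<^sup>*" using conn x y XV unfolding connected_graph_def by blast
  then obtain v0 u0 where e: "(v0,u0) \<in> E" and v0: "v0 \<in> X" and u0: "u0 \<notin> X"
    using leave[OF _ x y(2)] by blast
  have u0V: "u0 \<in> V" using e EV by auto
  have v0N: "v0 \<in> in_nbrs V E u0" using e EV by (auto simp: in_nbrs_def)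
  have cp0: "cp u0 v0 \<ge> 1/n"
  proof -
    let ?N = "in_nbrs V E u0"
    let ?f = "fit S \<delta> X v0 u0"
    have cN: "card ?N \<ge> 1" using v0N N_fin by (metis One_nat_def Suc_leI card_gt_0_iff empty_iff)
    have "(\<Sum>x\<in>?N. fit S \<delta> X x u0 * 1) \<le> (\<Sum>x\<in>?N. ?f)"
      using v0 dpos by (intro sum_mono) (auto simp: fit_def)
    also have "\<dots> = real (card ?N) * ?f" by simp
    finally have den: "(\<Sum>x\<in>?N. fit S \<delta> X x u0 * 1) \<le> real (card ?N) * ?f" .
    have fpos: "?f > 0" using fit_ge1[of X v0 u0] by linarith
    have dp: "(\<Sum>x\<in>?N. fit S \<delta> X x u0 * 1) > 0" using den_pos[OF u0V] .
    have "cp u0 v0 = ?f / (\<Sum>x\<in>?N. fit S \<delta> X x u0 * 1)" unfolding cp_def choose_prob_def by simp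
    also have "\<dots> \<ge> ?f / (real (card ?N) * ?f)" using den dp fpos
      by (intro divide_left_mono) auto
    finally have "cp u0 v0 \<ge> 1 / real (card ?N)" using fpos by simp
    moreover have "1 / real (card ?N) \<ge> 1/n" unfolding n_def using cN N_card[of u0]
      by (intro divide_left_mono) auto
    ultimately show ?thesis by linarith
  qed
  have A1nn: "A1 u \<ge> 0" for u unfolding A1_def using cpnn by (intro sum_nonneg) (auto simp: i1_def)
  have A1u0: "A1 u0 \<ge> 1/n"
  proof -
    have "A1 u0 \<ge> cp u0 v0 * i1 u0 v0" unfolding A1_def
      using cpnn v0N by (intro member_le_sum N_fin) (auto simp: i1_def)
    then show ?thesis using cp0 u0 v0 by (simp add: i1_def)
  qed
  have Ub: "U \<ge> 1/n^2"
  proof -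
    have "U \<ge> (1/n) * A1 u0" unfolding U_def using A1nn n1 u0V
      by (intro member_le_sum fin) auto
    moreover have "(1/n) * A1 u0 \<ge> (1/n) * (1/n)" using A1u0 n1 by (intro mult_left_mono) auto
    ultimately show ?thesis by (simp add: power2_eq_square)
  qed
  have "D1 * U \<ge> D1 * (1/n^2)" using Ub D1nn by (intro mult_left_mono) auto
  moreover have "D1 * (1/n^2) \<ge> 3 * (\<epsilon> * B^k)"
  proof -
    have "D1 / n^2 \<ge> (3 * n^2 * \<epsilon> * B^k) / n^2" using D1 n1 by (intro divide_right_mono) auto
    moreover have "(3 * n^2 * \<epsilon> * B^k) / n^2 = 3 * (\<epsilon> * B^k)" using n1 by simp
    ultimately show ?thesis by simp
  qed
  moreover have "D0 * Dn \<le> D0" using mult_left_mono[OF Dn D0] by simp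
  moreover have "\<epsilon> * B^k \<ge> \<epsilon>" using mult_left_mono[OF Bk, of \<epsilon>] epos by simp
  moreover have "D0 = \<epsilon> * B^k" by (rule D0_def)
  ultimately have "\<phi> k + D1 * U - D0 * Dn - b > \<phi> k" using bb epos by linarith
  with T show ?thesis unfolding cp_def n_def k_def by simp
qed


lemma fp_lower:
  fixes \<phi> :: "nat \<Rightarrow> real" and g :: "'a set \<Rightarrow> real"
  assumes phi: "\<And>j. \<phi> j = 1 - (real (card V) / (1+\<delta>)) * ((4*real(card V)^2)^(card V) - (4*real(card V)^2)^j)"
   and g: "\<And>Y. g Y = (if Y \<subseteq> V \<and> Y \<inter> S \<noteq> {} then \<phi> (card Y) else 0)"
   and conn: "connected_graph V E"
   and XV: "X \<subseteq> V" and XS: "X \<inter> S \<noteq> {}"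
  shows "fp V E (\<lambda>_. 1) S \<delta> X \<ge> \<phi> (card X)"
proof -
  define f where "f = fp V E (\<lambda>_. 1) S \<delta>"
  define G where "G = {Y. Y \<subseteq> V \<and> Y \<inter> S \<noteq> {}}"
  define \<psi> where "\<psi> = (\<lambda>Y. f Y - \<phi> (card Y))"
  have finG: "finite G" unfolding G_def using fin by (rule finite_subset[rotated, OF finite_Pow_iff[THEN iffD2]]) auto
  have XG: "X \<in> G" using XV XS by (simp add: G_def)
  define m where "m = Min (\<psi> ` G)"
  have mle: "\<And>Y. Y \<in> G \<Longrightarrow> m \<le> \<psi> Y" unfolding m_def using finG by simp
  have "m \<ge> 0"
  proof (rule ccontr)
    assume "\<not> m \<ge> 0"
    then have mneg: "m < 0" by simp
    have "m \<in> \<psi> ` G" unfolding m_def using finG XG by (intro Min_in) auto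
    then obtain X0 where X0: "X0 \<in> G" "\<psi> X0 = m" by blast
    show False
    proof (cases "X0 = V")
      case True
      have "\<psi> X0 = 0" unfolding \<psi>_def f_def True fp_V phi by simp
      then show False using X0 mneg by simp
    next
      case False
      have ge: "f (upd_conf X0 u v) \<ge> g (upd_conf X0 u v) + m" for u v
      proof (cases "upd_conf X0 u v \<in> G")
        case True
        then show ?thesis using mle[OF True] g[of "upd_conf X0 u v"] unfolding \<psi>_def G_def by auto
      next
        case nG: False
        then have "g (upd_conf X0 u v) = 0" using g unfolding G_def by auto
        then show ?thesis using fp_bounds mneg unfolding f_def by (smt (verit))
      qed
      have "f X0 = (\<Sum>u\<in>V. (1 / real (card V)) * (\<Sum>v\<in>in_nbrs V E u. choose_prob V E (\<lambda>_. 1) S \<delta> X0 u v *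
               f (upd_conf X0 u v)))" unfolding f_def using fp_harm[OF False] .
      also have "\<dots> \<ge> (\<Sum>u\<in>V. (1 / real (card V)) * (\<Sum>v\<in>in_nbrs V E u. choose_prob V E (\<lambda>_. 1) S \<delta> X0 u v *
               (g (upd_conf X0 u v) + m)))"
        using ge cp_nonneg card_pos by (intro sum_mono mult_left_mono) auto
      also have "(\<Sum>u\<in>V. (1 / real (card V)) * (\<Sum>v\<in>in_nbrs V E u. choose_prob V E (\<lambda>_. 1) S \<delta> X0 u v *
               (g (upd_conf X0 u v) + m))) = (\<Sum>u\<in>V. (1 / real (card V)) * ((\<Sum>v\<in>in_nbrs V E u. choose_prob V E (\<lambda>_. 1) S \<delta> X0 u v *
               g (upd_conf X0 u v)) + m))"
      proof (rule sum.cong[OF refl])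
        fix u assume u: "u \<in> V"
        have "(\<Sum>v\<in>in_nbrs V E u. choose_prob V E (\<lambda>_. 1) S \<delta> X0 u v * (g (upd_conf X0 u v) + m))
          = (\<Sum>v\<in>in_nbrs V E u. choose_prob V E (\<lambda>_. 1) S \<delta> X0 u v * g (upd_conf X0 u v))
            + m * (\<Sum>v\<in>in_nbrs V E u. choose_prob V E (\<lambda>_. 1) S \<delta> X0 u v)"
          by (simp add: algebra_simps sum.distrib sum_distrib_left)
        then show "(1 / real (card V)) * (\<Sum>v\<in>in_nbrs V E u. choose_prob V E (\<lambda>_. 1) S \<delta> X0 u v * (g (upd_conf X0 u v) + m))
          = (1 / real (card V)) * ((\<Sum>v\<in>in_nbrs V E u. choose_prob V E (\<lambda>_. 1) S \<delta> X0 u v * g (upd_conf X0 u v)) + m)"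
          using cp_sum[OF u] by simp
      qed
      also have "\<dots> = (\<Sum>u\<in>V. (1 / real (card V)) * (\<Sum>v\<in>in_nbrs V E u. choose_prob V E (\<lambda>_. 1) S \<delta> X0 u v *
               g (upd_conf X0 u v))) + m * (\<Sum>u\<in>V. 1 / real (card V))"
        by (simp add: algebra_simps sum.distrib sum_distrib_left)
      also have "\<dots> = (\<Sum>u\<in>V. (1 / real (card V)) * (\<Sum>v\<in>in_nbrs V E u. choose_prob V E (\<lambda>_. 1) S \<delta> X0 u v *
               g (upd_conf X0 u v))) + m" using outer_one by simp
      finally have "f X0 \<ge> \<dots>" .
      moreover have "(\<Sum>u\<in>V. (1 / real (card V)) * (\<Sum>v\<in>in_nbrs V E u. choose_prob V E (\<lambda>_. 1) S \<delta> X0 u v *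
               g (upd_conf X0 u v))) > \<phi> (card X0)"
        using X0(1) False unfolding G_def by (intro key[OF phi g conn]) auto
      ultimately have "\<psi> X0 > m" unfolding \<psi>_def by linarith
      then show False using X0 by simp
    qed
  qed
  then show ?thesis using mle[OF XG] unfolding \<psi>_def f_def by linarith
qed

end

theorem mainTheorem3:
  fixes V :: "'a set" and E :: "('a \<times> 'a) set" and S X :: "'a set"
  assumes "finite V"
    and "E \<subseteq> V \<times> V"
    and "sym E"
    and "connected_graph V E"
    and "\<forall>u\<in>V. (u, u) \<in> E"
    and "S \<subseteq> V"
    and "X \<subseteq> V"
    and "X \<inter> S \<noteq> {}"
  shows "((\<lambda>\<delta>. fp V E (\<lambda>_. 1) S \<delta> X) \<longlongrightarrow> 1) at_top"
proof -
  have Vne: "V \<noteq> {}" using assms(7,8) by auto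
  define B where "B = (4*real(card V)^2)"
  define c where "c = real (card V) * B^(card V)"
  have B0: "B \<ge> 0" unfolding B_def by simp
  have lo: "\<forall>\<^sub>F d in at_top. 1 - c / (1+d) \<le> fp V E (\<lambda>_. 1) S d X"
    using eventually_ge_at_top[of "0::real"]
  proof (rule eventually_mono)
    fix d :: real assume d: "d \<ge> 0"
    let ?phi = "\<lambda>j. 1 - (real (card V) / (1+d)) * ((4*real(card V)^2)^(card V) - (4*real(card V)^2)^j)"
    have "fp V E (\<lambda>_. 1) S d X \<ge> ?phi (card X)"
      apply (rule fp_lower[where \<phi> = ?phi and g = "\<lambda>Y. if Y \<subseteq> V \<and> Y \<inter> S \<noteq> {} then ?phi (card Y) else 0"])
      using assms Vne d by auto
    moreover have "?phi (card X) \<ge> 1 - c / (1+d)"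
    proof -
      have "(real (card V) / (1+d)) * (B^(card V) - B^(card X)) \<le> (real (card V) / (1+d)) * B^(card V)"
        using d B0 by (intro mult_left_mono) auto
      then show ?thesis unfolding c_def B_def by simp
    qed
    ultimately show "1 - c / (1+d) \<le> fp V E (\<lambda>_. 1) S d X" by linarith
  qed
  have hi: "\<forall>\<^sub>F d in at_top. fp V E (\<lambda>_. 1) S d X \<le> 1"
    using eventually_ge_at_top[of "0::real"]
  proof (rule eventually_mono)
    fix d :: real assume d: "d \<ge> 0"
    show "fp V E (\<lambda>_. 1) S d X \<le> 1" using fp_bounds[of V E d S X] assms Vne d by auto
  qed
  have lim: "((\<lambda>d. 1 - c / (1+d)) \<longlongrightarrow> 1) at_top"
  proof -
    have "((\<lambda>d::real. c / (1+d)) \<longlongrightarrow> 0) at_top"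
      by (intro tendsto_divide_0[OF tendsto_const] filterlim_at_top_imp_at_infinity
          filterlim_tendsto_add_at_top[OF tendsto_const filterlim_ident])
    then show ?thesis using tendsto_diff[OF tendsto_const, of _ 0 at_top 1] by simp
  qed
  show ?thesis by (rule tendsto_sandwich[OF lo hi lim tendsto_const])
qed

end
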